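(* Let $(L,[\cdot,\cdot,\cdot],\alpha,\omega)$ be a symplectic 3-Hom-Lie algebra. Then the trilinear operation $\{\cdot,\cdot,\cdot\}$ on $L$ determined by $$\omega(\{x,y,z\},\alpha(w))=-\omega(\alpha(z),[x,y,w])\quad\text{for all }x,y,z,w\in L$$ makes $(L,\{\cdot,\cdot,\cdot\},\alpha)$ a 3-Hom-pre-Lie algebra compatible with $L$, i.e. $\{x,y,z\}+\{y,z,x\}+\{z,x,y\}=[x,y,z]$ for all $x,y,z\in L$.
   Context: A 3-Hom-Lie algebra is a triple $(L,[\cdot,\cdot,\cdot],\alpha)$ with $[\cdot,\cdot,\cdot]:\wedge^3L\to L$ skew-symmetric trilinear and $\alpha$ linear satisfying $[\alpha(x),\alpha(y),[u,v,w]]=[[x,y,u],\alpha(v),\alpha(w)]+[\alpha(u),[x,y,v],\alpha(w)]+[\alpha(u),\alpha(v),[x,y,w]]$; it is regular if $\alpha$ is an algebra automorphism. A symplectic 3-Hom-Lie algebra $(L,[\cdot,\cdot,\cdot],\alpha,\omega)$ is a regular 3-Hom-Lie algebra with a nondegenerate skew-symmetric bilinear form $\omega$ such that $\omega(\alpha(x),\alpha(y))=\omega(x,y)$ and $\omega([x,y,z],\alpha(w))-\omega([y,z,w],\alpha(x))+\omega([z,w,x],\alpha(y))-\omega([w,x,y],\alpha(z))=0$ for all $x,y,z,w$. A 3-Hom-pre-Lie algebra is $(L,\{\cdot,\cdot,\cdot\},\alpha)$ with trilinear $\{\cdot,\cdot,\cdot\}$ such that, with $[x,y,z]_C=\{x,y,z\}+\{y,z,x\}+\{z,x,y\}$: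 $\{x,y,z\}=-\{y,x,z\}$; $\{\alpha(x),\alpha(y),\{z,u,v\}\}=\{[x,y,z]_C,\alpha(u),\alpha(v)\}+\{\alpha(z),[x,y,u]_C,\alpha(v)\}+\{\alpha(z),\alpha(u),\{x,y,v\}\}$; $\{[x,y,z]_C,\alpha(u),\alpha(v)\}=\{\alpha(x),\alpha(y),\{z,u,v\}\}+\{\alpha(y),\alpha(z),\{x,u,v\}\}+\{\alpha(z),\alpha(x),\{y,u,v\}\}$. *)

theory Defs
  imports Complex_Main
begin

definition trilinear ::
  "('k::field \<Rightarrow> 'v::ab_group_add \<Rightarrow> 'v) \<Rightarrow> ('v \<Rightarrow> 'v \<Rightarrow> 'v \<Rightarrow> 'v) \<Rightarrow> bool" where
  "trilinear scale T \<longleftrightarrow>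
     (\<forall>y z. Vector_Spaces.linear scale scale (\<lambda>x. T x y z)) \<and>
     (\<forall>x z. Vector_Spaces.linear scale scale (\<lambda>y. T x y z)) \<and>
     (\<forall>x y. Vector_Spaces.linear scale scale (\<lambda>z. T x y z))"

definition bilinear_form ::
  "('k::field \<Rightarrow> 'v::ab_group_add \<Rightarrow> 'v) \<Rightarrow> ('v \<Rightarrow> 'v \<Rightarrow> 'k) \<Rightarrow> bool" where
  "bilinear_form scale \<omega> \<longleftrightarrow>
     (\<forall>y. Vector_Spaces.linear scale (*) (\<lambda>x. \<omega> x y)) \<and>
     (\<forall>x. Vector_Spaces.linear scale (*) (\<lambda>y. \<omega> x y))"

definition skew3 :: "('v::ab_group_add \<Rightarrow> 'v \<Rightarrow> 'v \<Rightarrow> 'v) \<Rightarrow> bool" where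
  "skew3 B \<longleftrightarrow> (\<forall>x y z. B x y z = - B y x z \<and> B x y z = - B x z y)"

definition hom_lie3 ::
  "('k::field \<Rightarrow> 'v::ab_group_add \<Rightarrow> 'v) \<Rightarrow> ('v \<Rightarrow> 'v \<Rightarrow> 'v \<Rightarrow> 'v) \<Rightarrow> ('v \<Rightarrow> 'v) \<Rightarrow> bool" where
  "hom_lie3 scale B \<alpha> \<longleftrightarrow>
     trilinear scale B \<and> skew3 B \<and> Vector_Spaces.linear scale scale \<alpha> \<and>
     (\<forall>x y u v w. B (\<alpha> x) (\<alpha> y) (B u v w) =
        B (B x y u) (\<alpha> v) (\<alpha> w) + B (\<alpha> u) (B x y v) (\<alpha> w) + B (\<alpha> u) (\<alpha> v) (B x y w))"

definition regular_hom_lie3 ::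
  "('k::field \<Rightarrow> 'v::ab_group_add \<Rightarrow> 'v) \<Rightarrow> ('v \<Rightarrow> 'v \<Rightarrow> 'v \<Rightarrow> 'v) \<Rightarrow> ('v \<Rightarrow> 'v) \<Rightarrow> bool" where
  "regular_hom_lie3 scale B \<alpha> \<longleftrightarrow>
     hom_lie3 scale B \<alpha> \<and> bij \<alpha> \<and> (\<forall>x y z. \<alpha> (B x y z) = B (\<alpha> x) (\<alpha> y) (\<alpha> z))"

definition symplectic_hom_lie3 ::
  "('k::field \<Rightarrow> 'v::ab_group_add \<Rightarrow> 'v) \<Rightarrow> ('v \<Rightarrow> 'v \<Rightarrow> 'v \<Rightarrow> 'v) \<Rightarrow> ('v \<Rightarrow> 'v)
     \<Rightarrow> ('v \<Rightarrow> 'v \<Rightarrow> 'k) \<Rightarrow> bool" where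
  "symplectic_hom_lie3 scale B \<alpha> \<omega> \<longleftrightarrow>
     regular_hom_lie3 scale B \<alpha> \<and>
     bilinear_form scale \<omega> \<and>
     (\<forall>x y. \<omega> x y = - \<omega> y x) \<and>
     (\<forall>x. (\<forall>y. \<omega> x y = 0) \<longrightarrow> x = 0) \<and>
     (\<forall>x y. \<omega> (\<alpha> x) (\<alpha> y) = \<omega> x y) \<and>
     (\<forall>x y z w. \<omega> (B x y z) (\<alpha> w) - \<omega> (B y z w) (\<alpha> x)
                 + \<omega> (B z w x) (\<alpha> y) - \<omega> (B w x y) (\<alpha> z) = 0)"

definition hom_pre_lie3 ::
  "('k::field \<Rightarrow> 'v::ab_group_add \<Rightarrow> 'v) \<Rightarrow> ('v \<Rightarrow> 'v \<Rightarrow> 'v \<Rightarrow> 'v) \<Rightarrow> ('v \<Rightarrow> 'v) \<Rightarrow> bool" where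
  "hom_pre_lie3 scale P \<alpha> \<longleftrightarrow>
     (let C = (\<lambda>x y z. P x y z + P y z x + P z x y) in
       trilinear scale P \<and> Vector_Spaces.linear scale scale \<alpha> \<and>
       (\<forall>x y z. P x y z = - P y x z) \<and>
       (\<forall>x y z u v. P (\<alpha> x) (\<alpha> y) (P z u v) =
          P (C x y z) (\<alpha> u) (\<alpha> v) + P (\<alpha> z) (C x y u) (\<alpha> v) + P (\<alpha> z) (\<alpha> u) (P x y v)) \<and>
       (\<forall>x y z u v. P (C x y z) (\<alpha> u) (\<alpha> v) =
          P (\<alpha> x) (\<alpha> y) (P z u v) + P (\<alpha> y) (\<alpha> z) (P x u v) + P (\<alpha> z) (\<alpha> x) (P y u v)))"

end

theory Submission imports Defs begin

lemma riesz:
  fixes scale :: "'k::field \<Rightarrow> 'v::ab_group_add \<Rightarrow> 'v" and \<omega> :: "'v \<Rightarrow> 'v \<Rightarrow> 'k"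
  assumes vs: "vector_space scale" and fin: "\<exists>S. finite S \<and> module.span scale S = UNIV"
    and bil: "bilinear_form scale \<omega>" and nd: "\<forall>x. (\<forall>y. \<omega> x y = 0) \<longrightarrow> x = 0"
    and f: "Vector_Spaces.linear scale (*) f"
  shows "\<exists>x. \<forall>w. \<omega> x w = f w"
proof -
  interpret V: vector_space scale by fact
  obtain S where S: "finite S" "V.span S = UNIV" using fin by blast
  obtain Bs where Bi: "V.independent Bs" and Bsp: "UNIV \<subseteq> V.span Bs"
    using V.basis_exists[of UNIV] by blast
  have Bf: "finite Bs" using V.independent_span_bound[OF S(1) Bi] S(2) by auto
  interpret F: finite_dimensional_vector_space scale Bs
    by unfold_locales (use Bf Bi Bsp in auto)
  have l1: "\<And>y. Vector_Spaces.linear scale (*) (\<lambda>x. \<omega> x y)" and l2: "\<And>x. Vector_Spaces.linear scale (*) (\<lambda>y. \<omega> x y)"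
    using bil unfolding bilinear_form_def by auto
  have add1: "\<omega> (a + b) y = \<omega> a y + \<omega> b y" for a b y using l1[of y] unfolding Vector_Spaces.linear_iff by blast
  have sc1: "\<omega> (scale c a) y = c * \<omega> a y" for c a y using l1[of y] unfolding Vector_Spaces.linear_iff by blast
  define T where "T x = (\<Sum>b\<in>Bs. scale (\<omega> x b) b)" for x
  have lT: "Vector_Spaces.linear scale scale T"
    unfolding Vector_Spaces.linear_iff
  proof (intro conjI allI)
    show "vector_space scale" by fact
    show "vector_space scale" by fact
    fix x y show "T (x + y) = T x + T y"
      unfolding T_def by (simp add: add1 V.scale_left_distrib sum.distrib)
  next
    fix c x show "T (scale c x) = scale c (T x)"
      unfolding T_def by (simp add: sc1 V.scale_sum_right)
  qed
  have vanish: "x = 0" if "\<And>b. b \<in> Bs \<Longrightarrow> \<omega> x b = 0" for x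
  proof -
    interpret L: Vector_Spaces.linear scale "(*)" "\<lambda>y. \<omega> x y" by (rule l2)
    have "\<omega> x y = 0" for y
      using L.eq_0_on_span[of Bs y] that Bsp by auto
    then show ?thesis using nd by blast
  qed
  have indep: "\<forall>c. (\<Sum>v\<in>Bs. scale (c v) v) = 0 \<longrightarrow> (\<forall>v\<in>Bs. c v = 0)"
    using Bi unfolding F.independent_explicit by blast
  have "inj T"
  proof -
    interpret L: Vector_Spaces.linear scale scale T by (rule lT)
    show ?thesis unfolding L.inj_iff_eq_0
    proof (intro allI impI)
      fix x assume "T x = 0"
      then have "\<forall>b\<in>Bs. \<omega> x b = 0"
        using indep[rule_format, of "\<lambda>b. \<omega> x b"] unfolding T_def by blast
      then show "x = 0" using vanish by blast
    qed
  qed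
  then have "surj T" using F.linear_inj_imp_surj[OF lT] by blast
  then obtain x where x: "T x = (\<Sum>b\<in>Bs. scale (f b) b)" by (metis surjD)
  have "(\<Sum>b\<in>Bs. scale (\<omega> x b - f b) b) = 0"
    using x unfolding T_def by (simp add: V.scale_left_diff_distrib sum_subtractf)
  then have eqB: "\<forall>b\<in>Bs. \<omega> x b - f b = 0"
    using indep[rule_format, of "\<lambda>b. \<omega> x b - f b"] by blast
  have lD: "Vector_Spaces.linear scale (*) (\<lambda>w. \<omega> x w - f w)"
    using l2[of x] f unfolding Vector_Spaces.linear_iff by (simp add: algebra_simps)
  interpret LD: Vector_Spaces.linear scale "(*)" "\<lambda>w. \<omega> x w - f w" by (rule lD)
  have "\<omega> x w - f w = 0" for w
    using LD.eq_0_on_span[of Bs w] eqB Bsp by auto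
  then show ?thesis by auto
qed

lemma vec3:
  fixes B :: "'v::ab_group_add \<Rightarrow> 'v \<Rightarrow> 'v \<Rightarrow> 'v" and \<alpha> :: "'v \<Rightarrow> 'v"
  assumes sk1: "\<And>a b c. B a b c = - B b a c" and sk2: "\<And>a b c. B a b c = - B a c b"
    and n3: "\<And>a b c. B a b (- c) = - B a b c"
    and FI: "\<And>x y u v w. B (\<alpha> x) (\<alpha> y) (B u v w) =
        B (B x y u) (\<alpha> v) (\<alpha> w) + B (\<alpha> u) (B x y v) (\<alpha> w) + B (\<alpha> u) (\<alpha> v) (B x y w)"
  shows "B (B x y z) (\<alpha> u) (\<alpha> t) + B (\<alpha> z) (\<alpha> u) (B x y t) + B (\<alpha> x) (\<alpha> u) (B y z t)
     + B (\<alpha> y) (\<alpha> u) (B z x t) = 0"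
proof -
  have cyc: "B a b c = B b c a" for a b c using sk1[of a b c] sk2[of b a c] by simp
  define A1 where "A1 = B (B x y z) (\<alpha> u) (\<alpha> t)"
  define A2 where "A2 = B (\<alpha> z) (\<alpha> u) (B x y t)"
  define A3 where "A3 = B (\<alpha> x) (\<alpha> u) (B y z t)"
  define A4 where "A4 = B (\<alpha> y) (\<alpha> u) (B z x t)"
  define G where "G = B (\<alpha> x) (\<alpha> t) (B y z u)"
  define H where "H = B (\<alpha> y) (\<alpha> z) (B x u t)"
  have f1: "G = B (B x t y) (\<alpha> z) (\<alpha> u) + B (\<alpha> y) (B x t z) (\<alpha> u) + B (\<alpha> y) (\<alpha> z) (B x t u)"
    unfolding G_def by (rule FI)
  have f2: "H = B (B y z x) (\<alpha> u) (\<alpha> t) + B (\<alpha> x) (B y z u) (\<alpha> t) + B (\<alpha> x) (\<alpha> u) (B y z t)"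
    unfolding H_def by (rule FI)
  have s1: "B (B x t y) (\<alpha> z) (\<alpha> u) = - A2"
  proof -
    have "B (B x t y) (\<alpha> z) (\<alpha> u) = B (\<alpha> z) (\<alpha> u) (B x t y)" by (rule cyc)
    also have "\<dots> = B (\<alpha> z) (\<alpha> u) (- B x y t)" by (subst sk2[of x t y], rule refl)
    finally show ?thesis unfolding A2_def by (simp add: n3)
  qed
  have s2: "B (\<alpha> y) (B x t z) (\<alpha> u) = - A4"
  proof -
    have "B (\<alpha> y) (B x t z) (\<alpha> u) = - B (\<alpha> y) (\<alpha> u) (B x t z)" by (rule sk2)
    also have "\<dots> = - B (\<alpha> y) (\<alpha> u) (B z x t)" by (subst cyc[of z x t], rule refl)
    finally show ?thesis unfolding A4_def .
  qed
  have s3: "B (\<alpha> y) (\<alpha> z) (B x t u) = - H"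
  proof -
    have "B x t u = - B x u t" by (rule sk2)
    then show ?thesis unfolding H_def by (simp add: n3)
  qed
  have s4: "B (B y z x) (\<alpha> u) (\<alpha> t) = A1"
  proof -
    have hx: "B y z x = B x y z" by (rule cyc[symmetric])
    show ?thesis unfolding A1_def hx ..
  qed
  have s5: "B (\<alpha> x) (B y z u) (\<alpha> t) = - G"
    unfolding G_def by (rule sk2)
  have e1: "G = - A2 - A4 - H" using f1 s1 s2 s3 by simp
  have e2: "H = A1 - G + A3" using f2 s4 s5 A3_def by simp
  have "A1 + A2 + A3 + A4 = 0" using e1 e2 by (simp add: algebra_simps)
  then show ?thesis unfolding A1_def A2_def A3_def A4_def .
qed

theorem proposition5p6:
  fixes scale :: "'k::field \<Rightarrow> 'v::ab_group_add \<Rightarrow> 'v"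
    and B :: "'v \<Rightarrow> 'v \<Rightarrow> 'v \<Rightarrow> 'v" and \<alpha> :: "'v \<Rightarrow> 'v" and \<omega> :: "'v \<Rightarrow> 'v \<Rightarrow> 'k"
  assumes vs: "vector_space scale"
    and fin: "\<exists>S. finite S \<and> module.span scale S = UNIV"
    and sympl: "symplectic_hom_lie3 scale B \<alpha> \<omega>"
  shows "(\<exists>!P. \<forall>x y z w. \<omega> (P x y z) (\<alpha> w) = - \<omega> (\<alpha> z) (B x y w))
    \<and> (\<forall>P. (\<forall>x y z w. \<omega> (P x y z) (\<alpha> w) = - \<omega> (\<alpha> z) (B x y w)) \<longrightarrow>
          hom_pre_lie3 scale P \<alpha> \<and> (\<forall>x y z. P x y z + P y z x + P z x y = B x y z))"
proof -
  have tri: "trilinear scale B" and skB: "skew3 B" and la: "Vector_Spaces.linear scale scale \<alpha>"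
    and FI: "\<And>x y u v w. B (\<alpha> x) (\<alpha> y) (B u v w) =
        B (B x y u) (\<alpha> v) (\<alpha> w) + B (\<alpha> u) (B x y v) (\<alpha> w) + B (\<alpha> u) (\<alpha> v) (B x y w)"
    and bij: "bij \<alpha>" and Bh: "\<And>x y z. \<alpha> (B x y z) = B (\<alpha> x) (\<alpha> y) (\<alpha> z)"
    and bil: "bilinear_form scale \<omega>" and wsk: "\<And>x y. \<omega> x y = - \<omega> y x"
    and nd: "\<forall>x. (\<forall>y. \<omega> x y = 0) \<longrightarrow> x = 0"
    and wa: "\<And>x y. \<omega> (\<alpha> x) (\<alpha> y) = \<omega> x y"
    and symp: "\<And>x y z w. \<omega> (B x y z) (\<alpha> w) - \<omega> (B y z w) (\<alpha> x)
                 + \<omega> (B z w x) (\<alpha> y) - \<omega> (B w x y) (\<alpha> z) = 0"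
    using sympl unfolding symplectic_hom_lie3_def regular_hom_lie3_def hom_lie3_def by blast+
  have sk1: "\<And>a b c. B a b c = - B b a c" and sk2: "\<And>a b c. B a b c = - B a c b"
    using skB unfolding skew3_def by blast+
  have cyc: "B a b c = B b c a" for a b c using sk1[of a b c] sk2[of b a c] by simp
  have lw1: "\<And>y. Vector_Spaces.linear scale (*) (\<lambda>x. \<omega> x y)"
    and lw2: "\<And>x. Vector_Spaces.linear scale (*) (\<lambda>y. \<omega> x y)"
    using bil unfolding bilinear_form_def by auto
  have vsk: "vector_space ((*) :: 'k \<Rightarrow> 'k \<Rightarrow> 'k)"
    using lw1 unfolding Vector_Spaces.linear_iff by blast
  have add1: "\<omega> (a + b) y = \<omega> a y + \<omega> b y" for a b y
    using lw1[of y] unfolding Vector_Spaces.linear_iff by blast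
  have sc1: "\<omega> (scale c a) y = c * \<omega> a y" for c a y
    using lw1[of y] unfolding Vector_Spaces.linear_iff by blast
  have neg1: "\<omega> (- a) y = - \<omega> a y" for a y
    using module_hom.neg[OF iffD2[OF module_hom_iff_linear lw1[of y]]] by simp
  have diff1: "\<omega> (a - b) y = \<omega> a y - \<omega> b y" for a b y
    using add1[of a "- b" y] neg1[of b y] by simp
  have add2: "\<omega> y (a + b) = \<omega> y a + \<omega> y b" for a b y
    using lw2[of y] unfolding Vector_Spaces.linear_iff by blast
  have sc2: "\<omega> y (scale c a) = c * \<omega> y a" for c a y
    using lw2[of y] unfolding Vector_Spaces.linear_iff by blast
  have neg2: "\<omega> y (- a) = - \<omega> y a" for a y
    using module_hom.neg[OF iffD2[OF module_hom_iff_linear lw2[of y]]] by simp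
  have diff2: "\<omega> y (a - b) = \<omega> y a - \<omega> y b" for a b y
    using add2[of y a "- b"] neg2[of y b] by simp
  have adda: "\<alpha> (a + b) = \<alpha> a + \<alpha> b" for a b
    using la unfolding Vector_Spaces.linear_iff by blast
  have sca: "\<alpha> (scale c a) = scale c (\<alpha> a)" for c a
    using la unfolding Vector_Spaces.linear_iff by blast
  have lB1: "\<And>y z. Vector_Spaces.linear scale scale (\<lambda>x. B x y z)"
    and lB2: "\<And>x z. Vector_Spaces.linear scale scale (\<lambda>y. B x y z)"
    and lB3: "\<And>x y. Vector_Spaces.linear scale scale (\<lambda>z. B x y z)"
    using tri unfolding trilinear_def by auto
  have addB1: "B (a + b) y z = B a y z + B b y z" for a b y z
    using lB1[of y z] unfolding Vector_Spaces.linear_iff by blast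
  have scB1: "B (scale c a) y z = scale c (B a y z)" for c a y z
    using lB1[of y z] unfolding Vector_Spaces.linear_iff by blast
  have addB2: "B x (a + b) z = B x a z + B x b z" for a b x z
    using lB2[of x z] unfolding Vector_Spaces.linear_iff by blast
  have scB2: "B x (scale c a) z = scale c (B x a z)" for c a x z
    using lB2[of x z] unfolding Vector_Spaces.linear_iff by blast
  have addB3: "B x y (a + b) = B x y a + B x y b" for a b x y
    using lB3[of x y] unfolding Vector_Spaces.linear_iff by blast
  have scB3: "B x y (scale c a) = scale c (B x y a)" for c a x y
    using lB3[of x y] unfolding Vector_Spaces.linear_iff by blast
  have negB3: "B x y (- a) = - B x y a" for a x y
    using module_hom.neg[OF iffD2[OF module_hom_iff_linear lB3[of x y]]] by simp
  have ia: "\<alpha> (inv \<alpha> a) = a" for a using bij by (simp add: bij_is_surj surj_f_inv_f)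
  have ai: "inv \<alpha> (\<alpha> a) = a" for a using bij by (simp add: bij_is_inj inv_f_f)
  have addi: "inv \<alpha> (a + b) = inv \<alpha> a + inv \<alpha> b" for a b
  proof -
    have "inv \<alpha> (a + b) = inv \<alpha> (\<alpha> (inv \<alpha> a + inv \<alpha> b))" by (simp add: adda ia)
    then show ?thesis by (simp add: ai)
  qed
  have sci: "inv \<alpha> (scale c a) = scale c (inv \<alpha> a)" for c a
  proof -
    have "inv \<alpha> (scale c a) = inv \<alpha> (\<alpha> (scale c (inv \<alpha> a)))" by (simp add: sca ia)
    then show ?thesis by (simp add: ai)
  qed
  have extw: "a = b" if h: "\<And>w. \<omega> a (\<alpha> w) = \<omega> b (\<alpha> w)" for a b
  proof -
    have "\<omega> (a - b) y = 0" for y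
      using h[of "inv \<alpha> y"] by (simp add: diff1 ia)
    then have "a - b = 0" using nd by blast
    then show ?thesis by simp
  qed
  have ext2: "a = b" if h: "\<And>t. \<omega> a (\<alpha> (\<alpha> t)) = \<omega> b (\<alpha> (\<alpha> t))" for a b
    using h[of "inv \<alpha> _"] by (intro extw) (simp add: ia)
  have ex: "\<exists>u. \<forall>w. \<omega> u (\<alpha> w) = - \<omega> (\<alpha> z) (B x y w)" for x y z
  proof -
    define g where "g = (\<lambda>w'. - \<omega> (\<alpha> z) (B x y (inv \<alpha> w')))"
    have lg: "Vector_Spaces.linear scale (*) g"
      unfolding Vector_Spaces.linear_iff g_def
      using vs vsk by (simp add: addi addB3 add2 sci scB3 sc2)
    obtain u where u: "\<forall>w. \<omega> u w = g w"
      using riesz[OF vs fin bil nd lg] by blast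
    have "\<forall>w. \<omega> u (\<alpha> w) = - \<omega> (\<alpha> z) (B x y w)" using u by (simp add: g_def ai)
    then show ?thesis by blast
  qed
  define P0 where "P0 x y z = (SOME u. \<forall>w. \<omega> u (\<alpha> w) = - \<omega> (\<alpha> z) (B x y w))" for x y z
  have P0: "\<forall>x y z w. \<omega> (P0 x y z) (\<alpha> w) = - \<omega> (\<alpha> z) (B x y w)"
  proof (intro allI)
    fix x y z w
    show "\<omega> (P0 x y z) (\<alpha> w) = - \<omega> (\<alpha> z) (B x y w)"
      using someI_ex[OF ex[of z x y]] unfolding P0_def by blast
  qed
  have part1: "\<exists>!P. \<forall>x y z w. \<omega> (P x y z) (\<alpha> w) = - \<omega> (\<alpha> z) (B x y w)"
  proof (rule ex1I[of _ P0])
    show "\<forall>x y z w. \<omega> (P0 x y z) (\<alpha> w) = - \<omega> (\<alpha> z) (B x y w)" by (rule P0)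
  next
    fix P assume hP: "\<forall>x y z w. \<omega> (P x y z) (\<alpha> w) = - \<omega> (\<alpha> z) (B x y w)"
    show "P = P0"
    proof (intro ext allI)
      fix x y z
      show "P x y z = P0 x y z" using hP P0 by (intro extw) simp
    qed
  qed
  have part2: "hom_pre_lie3 scale P \<alpha> \<and> (\<forall>x y z. P x y z + P y z x + P z x y = B x y z)"
    if hP0: "\<forall>x y z w. \<omega> (P x y z) (\<alpha> w) = - \<omega> (\<alpha> z) (B x y w)" for P
  proof -
    have hP: "\<omega> (P x y z) (\<alpha> w) = - \<omega> (\<alpha> z) (B x y w)" for x y z w using hP0 by blast
    have compat: "P x y z + P y z x + P z x y = B x y z" for x y z
    proof (rule extw)
      fix w
      have e1: "\<omega> (B z w x) (\<alpha> y) = \<omega> (\<alpha> y) (B z x w)"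
        using sk2[of z w x] neg1 wsk[of "B z x w" "\<alpha> y"] by simp
      have e2: "\<omega> (B w x y) (\<alpha> z) = - \<omega> (\<alpha> z) (B x y w)"
        using cyc[of w x y] wsk[of "B x y w" "\<alpha> z"] by simp
      have e3: "\<omega> (B y z w) (\<alpha> x) = - \<omega> (\<alpha> x) (B y z w)"
        using wsk[of "B y z w" "\<alpha> x"] by simp
      have "\<omega> (B x y z) (\<alpha> w) = - \<omega> (\<alpha> x) (B y z w) - \<omega> (\<alpha> y) (B z x w) - \<omega> (\<alpha> z) (B x y w)"
        using symp[of x y z w] unfolding e1 e2 e3 by algebra
      then show "\<omega> (P x y z + P y z x + P z x y) (\<alpha> w) = \<omega> (B x y z) (\<alpha> w)"
        by (simp add: add1 hP)
    qed
    have K: "\<omega> (P (\<alpha> a) (\<alpha> b) (P c d e)) (\<alpha> (\<alpha> t)) = \<omega> (\<alpha> (\<alpha> e)) (B (\<alpha> c) (\<alpha> d) (B a b t))"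
      for a b c d e t
    proof -
      have "\<omega> (P (\<alpha> a) (\<alpha> b) (P c d e)) (\<alpha> (\<alpha> t)) = - \<omega> (\<alpha> (P c d e)) (B (\<alpha> a) (\<alpha> b) (\<alpha> t))"
        by (rule hP)
      also have "\<dots> = - \<omega> (\<alpha> (P c d e)) (\<alpha> (B a b t))" by (simp add: Bh)
      also have "\<dots> = - \<omega> (P c d e) (\<alpha> (inv \<alpha> (B a b t)))" by (simp add: wa ia)
      also have "\<dots> = \<omega> (\<alpha> e) (B c d (inv \<alpha> (B a b t)))" by (simp add: hP)
      also have "\<dots> = \<omega> (\<alpha> (\<alpha> e)) (\<alpha> (B c d (inv \<alpha> (B a b t))))" by (simp add: wa)
      also have "\<dots> = \<omega> (\<alpha> (\<alpha> e)) (B (\<alpha> c) (\<alpha> d) (B a b t))" by (simp add: Bh ia)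
      finally show ?thesis .
    qed
    have K2: "\<omega> (P a b c) (\<alpha> (\<alpha> t)) = - \<omega> (\<alpha> c) (B a b (\<alpha> t))" for a b c t by (rule hP)
    have trP: "trilinear scale P"
      unfolding trilinear_def Vector_Spaces.linear_iff
      using vs by (auto intro!: extw simp: hP add1 sc1 addB1 addB2 add2 sc2 scB1 scB2 adda sca)
    have antiP: "P x y z = - P y x z" for x y z
      by (rule extw) (simp add: hP neg1 sk1[of y x] neg2)
    have id2: "P (\<alpha> x) (\<alpha> y) (P z u v) =
          P (B x y z) (\<alpha> u) (\<alpha> v) + P (\<alpha> z) (B x y u) (\<alpha> v) + P (\<alpha> z) (\<alpha> u) (P x y v)" for x y z u v
      by (rule ext2) (simp only: add1 K, simp add: K2 FI[of x y z u _] add2)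
    have id3: "P (B x y z) (\<alpha> u) (\<alpha> v) =
          P (\<alpha> x) (\<alpha> y) (P z u v) + P (\<alpha> y) (\<alpha> z) (P x u v) + P (\<alpha> z) (\<alpha> x) (P y u v)" for x y z u v
    proof (rule ext2)
      fix t
      have "B (B x y z) (\<alpha> u) (\<alpha> t) + B (\<alpha> z) (\<alpha> u) (B x y t) + B (\<alpha> x) (\<alpha> u) (B y z t)
          + B (\<alpha> y) (\<alpha> u) (B z x t) = 0"
        by (rule vec3[OF sk1 sk2 negB3 FI])
      then have v: "B (B x y z) (\<alpha> u) (\<alpha> t) = - (B (\<alpha> z) (\<alpha> u) (B x y t) + B (\<alpha> x) (\<alpha> u) (B y z t)
          + B (\<alpha> y) (\<alpha> u) (B z x t))"
        by (simp add: algebra_simps eq_neg_iff_add_eq_0)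
      show "\<omega> (P (B x y z) (\<alpha> u) (\<alpha> v)) (\<alpha> (\<alpha> t)) = \<omega> (P (\<alpha> x) (\<alpha> y) (P z u v) + P (\<alpha> y) (\<alpha> z) (P x u v) + P (\<alpha> z) (\<alpha> x) (P y u v)) (\<alpha> (\<alpha> t))"
        by (simp only: add1 K, simp add: K2 v neg2 add2 diff2)
    qed
    show ?thesis
      unfolding hom_pre_lie3_def Let_def compat
      using trP la antiP id2 id3 compat by blast
  qed
  show ?thesis using part1 part2 by blast
qed

end
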